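(* If a depth-proper mttr $M$ is finite-nesting, then $M$ is LSHI, i.e., there is $b\in\mathbb N$ with $H(M(t))\le b\cdot|t|$ for all input trees $t$.
   Context: Trees: for a ranked alphabet $\Sigma$, $T_\Sigma$ is the set of finite ranked ordered trees over $\Sigma$, and $T_\Sigma(A)$ the trees over $\Sigma$ with additional rank-0 symbols from $A$. $X_k=\{x_1,\dots,x_k\}$ are input variables and $Y=\{y_1,y_2,\dots\}$, $Y_m=\{y_1,\dots,y_m\}$ are parameters. A (deterministic bottom-up) tree automaton $(P,\Sigma,h)$ has a finite state set $P$ and maps $h_\sigma:P^k\to P$ for $\sigma\in\Sigma^{(k)}$; $\hat h:T_\Sigma\to P$ is its run and $L_p=\{s\in T_\Sigma\mid \hat h(s)=p\}$. A (total, deterministic) macro tree transducer with look-ahead (mttr) is $M=(Q,P,\Sigma,\Delta,q_0,R,h)$ where $Q$ is a ranked alphabet of states, $\Sigma,\Delta$ are ranked input/output alphabets, $(P,\Sigma,h)$ is a tree automaton (the look-ahead), $q_0\in Q^{(0)}$, and for each $q\in Q^{(m)}$, $\sigma\in\Sigma^{(k)}$, $p_1,\dots,p_k\in P$ there is exactly one rule $\langle q,\sigma(x_1:p_1,\dots,x_k:p_k)\rangle(y_1,\dots,y_m)\to t$ with $t\in T_{\Delta\cup\langle Q,X_k\rangle}(Y_m)$, where $\langle q',x_i\rangle$ has the rank of $q'$. For $q\in Q^{(m)}$ and $s=\sigma(s_1,\dots,s_k)$, $M_q(s)\in T_\Delta(Y_m)$ is obtained from the right-hand side of the rule for $(q,\sigma,\hat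 h(s_1),\dots,\hat h(s_k))$ by replacing (recursively, innermost first) each subtree $\langle q',x_i\rangle(\xi_1,\dots,\xi_n)$ by $M_{q'}(s_i)$ with each $y_j$ replaced by (the result for) $\xi_j$; $M(s)=M_{q_0}(s)$. Extension and reachability: $\hat M$ is the mttr with input alphabet $\Sigma\cup P$ (each $p\in P$ a rank-0 input symbol with $\hat h_p()=p$), output alphabet $\Delta\cup\langle Q,P\rangle$ (where $\langle q,p\rangle$ has the rank of $q$), the rules of $M$ plus the rules $\langle q,p\rangle(y_1,\dots,y_m)\to\langle q,p\rangle(y_1,\dots,y_m)$ for $q\in Q^{(m)}$, $p\in P$. A pair $\langle q,p\rangle$ is reachable if it occurs in $\hat M(s)$ for some $s\in T_\Sigma(P)$. Depth-proper: for $y\in Y$ and $s\in T_\Delta(Y)$, $\lfloor s\rfloor_y$ is obtained from $s$ by replacing every maximal subtree not containing $y$ by a new rank-0 symbol $\$$. $M$ is depth-proper if for every reachable $\langle q,p\rangle$ with $q\in Q^{(m)}$ and every $y\in Y_m$, the set $\{\lfloor M_q(s)\rfloor_y\mid s\in L_p\}$ is infinite. Size and height: $|t|$ is the number of nodes of $t$; the height $H(t)$ is the number of nodes on a longest root-to-leaf path. Nesting: for $t\in T_\Sigma(P)$, the nesting of a root-to-leaf path of $\hat M(t)$ is the number of its nodes labeled by symbols of $\langle Q,P\rangle$. $M$ is finite-nesting if there is $b\in\mathbb N$ such that for every $t\in T_\Sigma(P)$ containing exactly one leaf labeled by a symbol of $P$, every root-to-leaf path of $\hat M(t)$ has nesting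 at most $b$. *)

theory Defs
  imports Main
begin

datatype 'a rtree = Nd 'a "'a rtree list"

fun lbl :: "'a rtree \<Rightarrow> 'a" where "lbl (Nd a ts) = a"

fun labels :: "'a rtree \<Rightarrow> 'a set" where
  "labels (Nd a ts) = insert a (\<Union> (set (map labels ts)))"

fun tsize :: "'a rtree \<Rightarrow> nat" where
  "tsize (Nd a ts) = 1 + sum_list (map tsize ts)"

fun theight :: "'a rtree \<Rightarrow> nat" where
  "theight (Nd a ts) = 1 + fold max (map theight ts) 0"

fun paths :: "'a rtree \<Rightarrow> 'a list set" where
  "paths (Nd a ts) = (if ts = [] then {[a]} else (\<lambda>p. a # p) ` (\<Union> (set (map paths ts))))"

fun count_nodes :: "('a \<Rightarrow> bool) \<Rightarrow> 'a rtree \<Rightarrow> nat" where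
  "count_nodes P (Nd a ts) = (if P a then 1 else 0) + sum_list (map (count_nodes P) ts)"

text \<open>Input labels of the extended input alphabet \<Sigma> \<union> P\<close>
datatype ('s,'p) ilab = In 's | LA 'p

text \<open>Right-hand side labels: output symbols of \<Delta>, calls <q',x_i> (i \<ge> 1), parameters y_j (j \<ge> 1)\<close>
datatype ('q,'d) rlab = Out 'd | Call 'q nat | Par nat

text \<open>Output labels: symbols of \<Delta>, symbols <q,p> of <Q,P>, parameters y_j, and the symbol $\<close>
datatype ('q,'p,'d) olab = ODelta 'd | OState 'q 'p | OPar nat | Dollar

record ('q,'p,'s,'d) mttr =
  states :: "'q set"
  rkQ :: "'q \<Rightarrow> nat"
  lastates :: "'p set"
  inp :: "'s set"
  rkI :: "'s \<Rightarrow> nat"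
  outp :: "'d set"
  rkO :: "'d \<Rightarrow> nat"
  init :: 'q
  rules :: "'q \<Rightarrow> 's \<Rightarrow> 'p list \<Rightarrow> ('q,'d) rlab rtree"
  la :: "'s \<Rightarrow> 'p list \<Rightarrow> 'p"

fun wf_rhs :: "('q,'p,'s,'d) mttr \<Rightarrow> nat \<Rightarrow> nat \<Rightarrow> ('q,'d) rlab rtree \<Rightarrow> bool" where
  "wf_rhs M k m (Nd (Out d) ts) =
     (d \<in> outp M \<and> length ts = rkO M d \<and> (\<forall>t\<in>set ts. wf_rhs M k m t))"
| "wf_rhs M k m (Nd (Call q i) ts) =
     (q \<in> states M \<and> 1 \<le> i \<and> i \<le> k \<and> length ts = rkQ M q \<and> (\<forall>t\<in>set ts. wf_rhs M k m t))"
| "wf_rhs M k m (Nd (Par j) ts) = (1 \<le> j \<and> j \<le> m \<and> ts = [])"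

definition wf_mttr :: "('q,'p,'s,'d) mttr \<Rightarrow> bool" where
  "wf_mttr M \<longleftrightarrow>
     finite (states M) \<and> finite (lastates M) \<and> finite (inp M) \<and> finite (outp M) \<and>
     init M \<in> states M \<and> rkQ M (init M) = 0 \<and>
     (\<forall>\<sigma>\<in>inp M. \<forall>ps. length ps = rkI M \<sigma> \<and> set ps \<subseteq> lastates M \<longrightarrow>
         la M \<sigma> ps \<in> lastates M \<and>
         (\<forall>q\<in>states M. wf_rhs M (rkI M \<sigma>) (rkQ M q) (rules M q \<sigma> ps)))"

text \<open>Input trees: T_\<Sigma> (withP = False) and T_\<Sigma>(P) (withP = True)\<close>
fun in_tree :: "('q,'p,'s,'d) mttr \<Rightarrow> bool \<Rightarrow> ('s,'p) ilab rtree \<Rightarrow> bool" where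
  "in_tree M withP (Nd (In \<sigma>) ts) =
     (\<sigma> \<in> inp M \<and> length ts = rkI M \<sigma> \<and> (\<forall>t\<in>set ts. in_tree M withP t))"
| "in_tree M withP (Nd (LA p) ts) = (withP \<and> p \<in> lastates M \<and> ts = [])"

text \<open>Run of the look-ahead automaton (extended by h_p() = p)\<close>
fun hrun :: "('q,'p,'s,'d) mttr \<Rightarrow> ('s,'p) ilab rtree \<Rightarrow> 'p" where
  "hrun M (Nd (In \<sigma>) ts) = la M \<sigma> (map (hrun M) ts)"
| "hrun M (Nd (LA p) ts) = p"

fun osubst :: "('q,'p,'d) olab rtree list \<Rightarrow> ('q,'p,'d) olab rtree \<Rightarrow> ('q,'p,'d) olab rtree" where
  "osubst args (Nd (OPar j) ts) = args ! (j - 1)"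
| "osubst args (Nd a ts) = Nd a (map (osubst args) ts)"

text \<open>Evaluating a right-hand side, given the results F!(i-1) q' = M_{q'}(s_i)\<close>
fun evrhs :: "('q \<Rightarrow> ('q,'p,'d) olab rtree) list \<Rightarrow> ('q,'d) rlab rtree \<Rightarrow> ('q,'p,'d) olab rtree" where
  "evrhs F (Nd (Out d) ts) = Nd (ODelta d) (map (evrhs F) ts)"
| "evrhs F (Nd (Call q i) ts) = osubst (map (evrhs F) ts) ((F ! (i - 1)) q)"
| "evrhs F (Nd (Par j) ts) = Nd (OPar j) []"

text \<open>Semantics of the extension \<hat>M: Mev M s q = \<hat>M_q(s)\<close>
fun Mev :: "('q,'p,'s,'d) mttr \<Rightarrow> ('s,'p) ilab rtree \<Rightarrow> 'q \<Rightarrow> ('q,'p,'d) olab rtree" where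
  "Mev M (Nd (In \<sigma>) ts) =
     (\<lambda>q. evrhs (map (Mev M) ts) (rules M q \<sigma> (map (hrun M) ts)))"
| "Mev M (Nd (LA p) ts) =
     (\<lambda>q. Nd (OState q p) (map (\<lambda>j. Nd (OPar j) []) [1..<rkQ M q + 1]))"

definition Mq :: "('q,'p,'s,'d) mttr \<Rightarrow> 'q \<Rightarrow> ('s,'p) ilab rtree \<Rightarrow> ('q,'p,'d) olab rtree" where
  "Mq M q s = Mev M s q"

text \<open>M(s) = M_{q0}(s); on T_\<Sigma>(P) this is \<hat>M(s)\<close>
definition Mout :: "('q,'p,'s,'d) mttr \<Rightarrow> ('s,'p) ilab rtree \<Rightarrow> ('q,'p,'d) olab rtree" where
  "Mout M s = Mq M (init M) s"

definition Lp :: "('q,'p,'s,'d) mttr \<Rightarrow> 'p \<Rightarrow> ('s,'p) ilab rtree set" where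
  "Lp M p = {s. in_tree M False s \<and> hrun M s = p}"

definition reachable :: "('q,'p,'s,'d) mttr \<Rightarrow> 'q \<Rightarrow> 'p \<Rightarrow> bool" where
  "reachable M q p \<longleftrightarrow> (\<exists>s. in_tree M True s \<and> OState q p \<in> labels (Mout M s))"

fun cut :: "nat \<Rightarrow> ('q,'p,'d) olab rtree \<Rightarrow> ('q,'p,'d) olab rtree" where
  "cut j (Nd a ts) = (if OPar j \<in> labels (Nd a ts) then Nd a (map (cut j) ts) else Nd Dollar [])"

definition depth_proper :: "('q,'p,'s,'d) mttr \<Rightarrow> bool" where
  "depth_proper M \<longleftrightarrow>
     (\<forall>q\<in>states M. \<forall>p\<in>lastates M. reachable M q p \<longrightarrow>
        (\<forall>j\<in>{1..rkQ M q}. infinite {cut j (Mq M q s) | s. s \<in> Lp M p}))"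

fun is_state_lab :: "('q,'p,'d) olab \<Rightarrow> bool" where
  "is_state_lab (OState q p) = True"
| "is_state_lab _ = False"

fun is_LA :: "('s,'p) ilab \<Rightarrow> bool" where
  "is_LA (LA p) = True"
| "is_LA _ = False"

definition nesting :: "('q,'p,'d) olab list \<Rightarrow> nat" where
  "nesting \<pi> = length (filter is_state_lab \<pi>)"

definition finite_nesting :: "('q,'p,'s,'d) mttr \<Rightarrow> bool" where
  "finite_nesting M \<longleftrightarrow>
     (\<exists>b::nat. \<forall>t. in_tree M True t \<and> count_nodes is_LA t = 1 \<longrightarrow>
        (\<forall>\<pi>\<in>paths (Mout M t). nesting \<pi> \<le> b))"

definition LSHI :: "('q,'p,'s,'d) mttr \<Rightarrow> bool" where
  "LSHI M \<longleftrightarrow> (\<exists>b::nat. \<forall>t. in_tree M False t \<longrightarrow> theight (Mout M t) \<le> b * tsize t)"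

end

theory Submission imports Defs begin

lemma paths_ne: "paths T \<noteq> {}"
  by (induction T) (auto simp: neq_Nil_conv)

lemma paths_labels: "\<pi> \<in> paths T \<Longrightarrow> set \<pi> \<subseteq> labels T"
  by (induction T arbitrary: \<pi>) (fastforce split: if_splits)

lemma paths_map: "paths (map_rtree f T) = map f ` paths T"
  by (induction T) (auto simp: image_UN image_image)

lemma fold_max_ge0: "(a::nat) \<le> fold max xs a"
proof (induction xs arbitrary: a)
  case (Cons x xs)
  have "max x a \<le> fold max xs (max x a)" by (rule Cons.IH)
  then show ?case by simp
qed simp

lemma fold_max_ge: "x \<in> set xs \<Longrightarrow> (x::nat) \<le> fold max xs a"
proof (induction xs arbitrary: a)
  case (Cons y xs)
  show ?case
  proof (cases "x = y")
    case True
    have "max x a \<le> fold max xs (max x a)" by (rule fold_max_ge0)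
    then show ?thesis using True by simp
  next
    case False
    then show ?thesis using Cons by simp
  qed
qed simp

lemma fold_max_le: "(\<forall>x\<in>set xs. x \<le> B) \<Longrightarrow> a \<le> B \<Longrightarrow> fold max xs a \<le> (B::nat)"
  by (induction xs arbitrary: a) auto

lemma theight_child: "c \<in> set cs \<Longrightarrow> theight c < theight (Nd a cs)"
  using fold_max_ge[of "theight c" "map theight cs" 0] by auto

lemma theight_map: "theight (map_rtree f T) = theight T"
  by (induction T) (simp, metis (no_types, lifting) comp_apply map_eq_conv map_map)

lemma theight_bound: "(\<forall>\<pi>\<in>paths T. length \<pi> \<le> B) \<Longrightarrow> theight T \<le> B"
proof (induction T arbitrary: B)
  case (Nd a cs)
  show ?case
  proof (cases "cs = []")
    case True then show ?thesis using Nd.prems by simp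
  next
    case False
    then obtain c where c: "c \<in> set cs" by (cases cs) auto
    obtain \<pi> where "\<pi> \<in> paths c" using paths_ne by blast
    hence "B \<ge> 1" using Nd.prems c False by fastforce
    have "\<forall>c\<in>set cs. theight c \<le> B - 1"
    proof
      fix c assume c: "c \<in> set cs"
      show "theight c \<le> B - 1"
        apply (rule Nd.IH[OF c])
        using Nd.prems c False by fastforce
    qed
    hence "fold max (map theight cs) 0 \<le> B - 1" by (intro fold_max_le) auto
    then show ?thesis using \<open>B \<ge> 1\<close> by simp
  qed
qed

fun good :: "'q set \<Rightarrow> ('q \<Rightarrow> nat) \<Rightarrow> nat \<Rightarrow> ('q,'p,'e) olab rtree \<Rightarrow> bool" where
  "good S rk m (Nd (OPar j) cs) = (1 \<le> j \<and> j \<le> m \<and> cs = [])"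
| "good S rk m (Nd (OState q p) cs) = (q \<in> S \<and> length cs = rk q \<and> (\<forall>c\<in>set cs. good S rk m c))"
| "good S rk m (Nd (ODelta d) cs) = (\<forall>c\<in>set cs. good S rk m c)"
| "good S rk m (Nd Dollar cs) = False"

lemma good_child: "good S rk m (Nd a cs) \<Longrightarrow> c \<in> set cs \<Longrightarrow> good S rk m c"
  by (cases a) auto

lemma osubst_Nd: "osubst args (Nd a ts) = (case a of OPar j \<Rightarrow> args ! (j-1) | _ \<Rightarrow> Nd a (map (osubst args) ts))"
  by (cases a) auto

lemma osubst_good:
  "good S rk n J \<Longrightarrow> length args = n \<Longrightarrow> \<forall>a\<in>set args. good S rk m a \<Longrightarrow> good S rk m (osubst args J)"
  proof (induction J)
  case (Nd a ts) then show ?case by (cases a) auto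
qed

lemma osubst_osubst:
  "good S rk n J \<Longrightarrow> length b = n \<Longrightarrow> osubst a (osubst b J) = osubst (map (osubst a) b) J"
  proof (induction J)
  case (Nd a ts) then show ?case by (cases a) (auto dest: good_child)
qed

lemma osubst_id:
  "good S rk m T \<Longrightarrow> osubst (map (\<lambda>j. Nd (OPar j) []) [1..<m+1]) T = T"
  proof (induction T)
  case (Nd a ts) then show ?case by (cases a) (auto simp del: upt_Suc simp: map_idI)
qed

lemma osubst_labels:
  "good S rk n J \<Longrightarrow> length args = n \<Longrightarrow> labels (osubst args J) \<subseteq> labels J \<union> \<Union>(labels ` set args)"
proof (induction J)
  case (Nd b ts)
  show ?case
  proof (cases b)
    case (OPar j) then show ?thesis using Nd.prems by auto
  next
    case (OState q p)
    have "\<forall>c\<in>set ts. labels (osubst args c) \<subseteq> labels c \<union> \<Union>(labels ` set args)"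
      using Nd OState by auto
    then show ?thesis using OState by fastforce
  next
    case (ODelta d)
    have "\<forall>c\<in>set ts. labels (osubst args c) \<subseteq> labels c \<union> \<Union>(labels ` set args)"
      using Nd ODelta by auto
    then show ?thesis using ODelta by fastforce
  next
    case Dollar then show ?thesis using Nd.prems by auto
  qed
qed

lemma osubst_paths:
  "good S rk n J \<Longrightarrow> length args = n \<Longrightarrow> \<pi> \<in> paths (osubst args J) \<Longrightarrow>
    \<pi> \<in> paths J \<or> (\<exists>\<rho> j \<sigma>. \<rho> @ [OPar j] \<in> paths J \<and> 1 \<le> j \<and> j \<le> n \<and> \<sigma> \<in> paths (args ! (j-1)) \<and> \<pi> = \<rho> @ \<sigma>)"
proof (induction J arbitrary: \<pi>)
  case (Nd a ts)
  show ?case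
  proof (cases "\<exists>j. a = OPar j")
    case True
    then obtain j where a: "a = OPar j" by blast
    show ?thesis using Nd.prems a by (intro disjI2 exI[of _ "[]"]) auto
  next
    case False
    hence os: "osubst args (Nd a ts) = Nd a (map (osubst args) ts)" by (cases a) auto
    show ?thesis
    proof (cases "ts = []")
      case True then show ?thesis using Nd.prems os by simp
    next
      case ne: False
      from Nd.prems(3) ne obtain c \<pi>1 where c: "c \<in> set ts" "\<pi>1 \<in> paths (osubst args c)" "\<pi> = a # \<pi>1"
        by (auto simp: os)
      have gc: "good S rk n c" using good_child Nd.prems(1) c(1) by blast
      from Nd.IH[OF c(1) gc Nd.prems(2) c(2)] show ?thesis
      proof
        assume "\<pi>1 \<in> paths c" then show ?thesis using c ne by auto
      next
        assume "\<exists>\<rho> j \<sigma>. \<rho> @ [OPar j] \<in> paths c \<and> 1 \<le> j \<and> j \<le> n \<and> \<sigma> \<in> paths (args ! (j-1)) \<and> \<pi>1 = \<rho> @ \<sigma>"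
        then obtain \<rho> j \<sigma> where "\<rho> @ [OPar j] \<in> paths c" "1 \<le> j" "j \<le> n" "\<sigma> \<in> paths (args ! (j-1))" "\<pi>1 = \<rho> @ \<sigma>"
          by blast
        then show ?thesis using c ne by (intro disjI2 exI[of _ "a # \<rho>"]) auto
      qed
    qed
  qed
qed


definition okM :: "('q,'p,'s,'d) mttr \<Rightarrow> bool" where
  "okM M \<longleftrightarrow> (\<forall>\<sigma>\<in>inp M. \<forall>ps. length ps = rkI M \<sigma> \<and> set ps \<subseteq> lastates M \<longrightarrow>
     la M \<sigma> ps \<in> lastates M \<and> (\<forall>q\<in>states M. wf_rhs M (rkI M \<sigma>) (rkQ M q) (rules M q \<sigma> ps)))"

lemma in_tree_True: "in_tree M w s \<Longrightarrow> in_tree M True s"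
proof (induction s)
  case (Nd a ts) then show ?case by (cases a) auto
qed

lemma hrun_in: "okM M \<Longrightarrow> in_tree M w s \<Longrightarrow> hrun M s \<in> lastates M"
proof (induction s)
  case (Nd a ts)
  show ?case
  proof (cases a)
    case (In \<sigma>)
    have "set (map (hrun M) ts) \<subseteq> lastates M" using Nd In by auto
    then show ?thesis using Nd.prems In unfolding okM_def by auto
  qed (use Nd in auto)
qed

lemma okM_rule: "okM M \<Longrightarrow> in_tree M w (Nd (In \<sigma>) ts) \<Longrightarrow> q \<in> states M \<Longrightarrow>
   wf_rhs M (length ts) (rkQ M q) (rules M q \<sigma> (map (hrun M) ts))"
proof -
  assume a: "okM M" "in_tree M w (Nd (In \<sigma>) ts)" "q \<in> states M"
  have "set (map (hrun M) ts) \<subseteq> lastates M" using a hrun_in[OF a(1)] by auto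
  then show ?thesis using a unfolding okM_def by auto
qed

lemma evrhs_good:
  "wf_rhs M k m r \<Longrightarrow> length F = k \<Longrightarrow>
   (\<forall>i<k. \<forall>q\<in>states M. good (states M) (rkQ M) (rkQ M q) ((F!i) q)) \<Longrightarrow>
   good (states M) (rkQ M) m (evrhs F r)"
proof (induction r)
  case (Nd a ts)
  show ?case
  proof (cases a)
    case (Out d) then show ?thesis using Nd by auto
  next
    case (Call q i)
    then show ?thesis using Nd
      by (auto intro!: osubst_good[where n="rkQ M q"])
  next
    case (Par j) then show ?thesis using Nd by auto
  qed
qed

lemma Mev_good: "okM M \<Longrightarrow> in_tree M True s \<Longrightarrow> q \<in> states M \<Longrightarrow>
  good (states M) (rkQ M) (rkQ M q) (Mev M s q)"
proof (induction s arbitrary: q)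
  case (Nd a ts)
  show ?case
  proof (cases a)
    case (In \<sigma>)
    have wf: "wf_rhs M (length ts) (rkQ M q) (rules M q \<sigma> (map (hrun M) ts))"
      using okM_rule Nd.prems In by metis
    show ?thesis using Nd In
      by (auto intro!: evrhs_good[OF wf])
  next
    case (LA p) then show ?thesis using Nd by auto
  qed
qed

lemma evrhs_labels:
  "wf_rhs M k m r \<Longrightarrow> length F = k \<Longrightarrow>
   (\<forall>i<k. \<forall>q\<in>states M. good (states M) (rkQ M) (rkQ M q) ((F!i) q)) \<Longrightarrow>
   a \<in> labels (evrhs F r) \<Longrightarrow>
   (\<exists>d. Out d \<in> labels r \<and> a = ODelta d) \<or> (\<exists>j. a = OPar j) \<or> (\<exists>i<k. \<exists>q\<in>states M. a \<in> labels ((F!i) q))"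
proof (induction r)
  case (Nd b ts)
  show ?case
  proof (cases b)
    case (Out d) then show ?thesis using Nd by fastforce
  next
    case (Call q i)
    have g: "good (states M) (rkQ M) (rkQ M q) ((F ! (i - 1)) q)" using Nd.prems Call by auto
    have "a \<in> labels ((F ! (i - 1)) q) \<union> \<Union>(labels ` set (map (evrhs F) ts))"
      using osubst_labels[OF g, of "map (evrhs F) ts"] Nd.prems Call by auto
    then show ?thesis
    proof
      assume "a \<in> labels ((F ! (i - 1)) q)"
      then show ?thesis using Nd.prems Call by (intro disjI2) (rule_tac x="i-1" in exI, auto)
    next
      assume "a \<in> \<Union>(labels ` set (map (evrhs F) ts))"
      then obtain c where c: "c \<in> set ts" "a \<in> labels (evrhs F c)" by auto
      from Nd.IH[OF c(1)] c Nd.prems Call show ?thesis by fastforce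
    qed
  next
    case (Par j) then show ?thesis using Nd by auto
  qed
qed

lemma Mev_noState: "okM M \<Longrightarrow> in_tree M False s \<Longrightarrow> q \<in> states M \<Longrightarrow>
  a \<in> labels (Mev M s q) \<Longrightarrow> \<not> is_state_lab a"
proof (induction s arbitrary: q a)
  case (Nd b ts)
  then obtain \<sigma> where b: "b = In \<sigma>" by (cases b) auto
  have wf: "wf_rhs M (length ts) (rkQ M q) (rules M q \<sigma> (map (hrun M) ts))"
    using okM_rule Nd.prems b by metis
  have gF: "\<forall>i<length ts. \<forall>q\<in>states M. good (states M) (rkQ M) (rkQ M q) ((map (Mev M) ts ! i) q)"
    using Nd.prems b Mev_good in_tree_True by fastforce
  have "(\<exists>d. a = ODelta d) \<or> (\<exists>j. a = OPar j) \<or> (\<exists>i<length ts. \<exists>q\<in>states M. a \<in> labels ((map (Mev M) ts ! i) q))"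
    using evrhs_labels[OF wf _ gF] Nd.prems b by auto
  moreover have "\<not> is_state_lab a" if "i < length ts" "q' \<in> states M" "a \<in> labels ((map (Mev M) ts ! i) q')" for i q'
    using that Nd.IH[of "ts ! i" q' a] Nd.prems b by auto
  ultimately show ?case by auto
qed


section \<open>Positions\<close>

primrec subt :: "nat list \<Rightarrow> 'a rtree \<Rightarrow> 'a rtree" where
  "subt [] t = t"
| "subt (i#u) t = (case t of Nd a ts \<Rightarrow> subt u (ts!i))"

primrec put :: "nat list \<Rightarrow> 'a rtree \<Rightarrow> 'a rtree \<Rightarrow> 'a rtree" where
  "put [] t x = x"
| "put (i#u) t x = (case t of Nd a ts \<Rightarrow> Nd a (ts[i := put u (ts!i) x]))"

primrec vp :: "nat list \<Rightarrow> 'a rtree \<Rightarrow> bool" where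
  "vp [] t = True"
| "vp (i#u) t = (case t of Nd a ts \<Rightarrow> i < length ts \<and> vp u (ts!i))"

lemma in_tree_subt: "in_tree M w t \<Longrightarrow> vp u t \<Longrightarrow> in_tree M w (subt u t)"
proof (induction u arbitrary: t)
  case (Cons i u)
  obtain a ts where t: "t = Nd a ts" by (cases t)
  show ?case using Cons t by (cases a) auto
qed simp

lemma in_tree_put: "in_tree M w t \<Longrightarrow> vp u t \<Longrightarrow> in_tree M w x \<Longrightarrow> in_tree M w (put u t x)"
proof (induction u arbitrary: t)
  case (Cons i u)
  obtain a ts where t: "t = Nd a ts" by (cases t)
  show ?case using Cons t by (cases a) (auto dest!: set_update_subset_insert[THEN subsetD])
qed simp

lemma hrun_put: "vp u t \<Longrightarrow> hrun M (put u t (Nd (LA (hrun M (subt u t))) [])) = hrun M t"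
proof (induction u arbitrary: t)
  case (Cons i u)
  obtain a ts where t: "t = Nd a ts" by (cases t)
  show ?case
  proof (cases a)
    case (In \<sigma>)
    have "map (hrun M) (ts[i := put u (ts ! i) (Nd (LA (hrun M (subt u (ts ! i)))) [])]) = map (hrun M) ts"
      using Cons t by (simp add: map_update) (metis list_update_id nth_map)
    then show ?thesis using t In by simp
  qed (use t in simp)
qed simp

section \<open>Replacement of state calls\<close>

fun repl :: "('q \<Rightarrow> ('q,'p,'e) olab rtree) \<Rightarrow> ('q,'p,'e) olab rtree \<Rightarrow> ('q,'p,'e) olab rtree" where
  "repl I (Nd (OState q p) cs) = osubst (map (repl I) cs) (I q)"
| "repl I (Nd (ODelta d) cs) = Nd (ODelta d) (map (repl I) cs)"
| "repl I (Nd (OPar j) cs) = Nd (OPar j) (map (repl I) cs)"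
| "repl I (Nd Dollar cs) = Nd Dollar (map (repl I) cs)"

lemma repl_id: "(\<forall>a\<in>labels T. \<not> is_state_lab a) \<Longrightarrow> repl I T = T"
proof (induction T)
  case (Nd a ts) then show ?case by (cases a) (auto intro: map_idI)
qed

lemma repl_osubst:
  "good S rk n J \<Longrightarrow> length args = n \<Longrightarrow> (\<forall>q\<in>S. good S rk (rk q) (I q)) \<Longrightarrow>
   repl I (osubst args J) = osubst (map (repl I) args) (repl I J)"
proof (induction J)
  case (Nd a cs)
  show ?case
  proof (cases a)
    case (OState q p)
    have IH: "\<And>c. c \<in> set cs \<Longrightarrow> repl I (osubst args c) = osubst (map (repl I) args) (repl I c)"
      using Nd OState by (auto dest: good_child)
    have "osubst (map (repl I) args) (osubst (map (repl I) cs) (I q)) =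
          osubst (map (osubst (map (repl I) args)) (map (repl I) cs)) (I q)"
      using Nd.prems OState by (intro osubst_osubst[where n="rk q"]) auto
    then show ?thesis using OState IH by (simp cong: map_cong)
  qed (use Nd in auto)
qed

lemma evrhs_repl:
  "wf_rhs M k m r \<Longrightarrow> length F = k \<Longrightarrow> length F' = k \<Longrightarrow>
   (\<forall>i<k. \<forall>q\<in>states M. good (states M) (rkQ M) (rkQ M q) ((F'!i) q) \<and> repl I ((F'!i) q) = (F!i) q) \<Longrightarrow>
   (\<forall>q\<in>states M. good (states M) (rkQ M) (rkQ M q) (I q)) \<Longrightarrow>
   repl I (evrhs F' r) = evrhs F r"
proof (induction r)
  case (Nd a ts)
  show ?case
  proof (cases a)
    case (Call q i)
    have g: "good (states M) (rkQ M) (rkQ M q) ((F' ! (i - 1)) q)" using Nd.prems Call by auto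
    have "repl I (osubst (map (evrhs F') ts) ((F' ! (i - 1)) q)) = osubst (map (repl I) (map (evrhs F') ts)) (repl I ((F' ! (i - 1)) q))"
      by (rule repl_osubst[OF g]) (use Nd.prems Call in auto)
    hence "repl I (evrhs F' (Nd a ts)) = osubst (map (repl I) (map (evrhs F') ts)) (repl I ((F' ! (i - 1)) q))"
      using Call by simp
    also have "map (repl I) (map (evrhs F') ts) = map (evrhs F) ts"
      using Nd Call by (auto intro!: map_cong)
    also have "repl I ((F' ! (i - 1)) q) = (F ! (i - 1)) q" using Nd.prems Call by auto
    also have "osubst (map (evrhs F) ts) ((F ! (i - 1)) q) = evrhs F (Nd a ts)"
      using Call by simp
    finally show ?thesis .
  qed (use Nd in auto)
qed

lemma decomp:
  fixes M :: "('q,'p,'s,'d) mttr"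
  shows "okM M \<Longrightarrow> vp u t \<Longrightarrow> in_tree M False t \<Longrightarrow> q \<in> states M \<Longrightarrow>
   Mev M t q = repl (Mev M (subt u t)) (Mev M (put u t (Nd (LA (hrun M (subt u t))) [])) q)"
proof (induction u arbitrary: t q)
  case Nil
  have g: "good (states M) (rkQ M) (rkQ M q) (Mev M t q)"
    using Mev_good[OF Nil(1) in_tree_True[OF Nil(3)] Nil(4)] .
  let ?P = "map (\<lambda>j. Nd (OPar j) []) [1..<rkQ M q + 1]"
  have e: "map (repl (Mev M t)) ?P = ?P" by (simp del: upt_Suc)
  have "repl (Mev M t) (Mev M (put [] t (Nd (LA (hrun M (subt [] t))) [])) q) = osubst (map (repl (Mev M t)) ?P) (Mev M t q)"
    by (simp del: upt_Suc map_map)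
  also have "\<dots> = osubst ?P (Mev M t q)" by (simp only: e)
  also have "\<dots> = Mev M t q" by (rule osubst_id[OF g])
  finally show ?case by simp
next
  case (Cons i u)
  obtain a ts where t: "t = Nd a ts" by (cases t)
  from Cons.prems t obtain \<sigma> where a: "a = In \<sigma>" by (cases a) auto
  define c where "c = ts ! i"
  define x where "x = (Nd (LA (hrun M (subt u c))) [] :: ('s,'p) ilab rtree)"
  define ts' where "ts' = ts[i := put u c x]"
  have i: "i < length ts" and vc: "vp u c" using Cons.prems t c_def by auto
  have ic: "in_tree M False c" using Cons.prems t a i c_def by auto
  have put: "put (i#u) t x = Nd (In \<sigma>) ts'" using t a c_def ts'_def by simp
  have hr: "map (hrun M) ts' = map (hrun M) ts"
    using hrun_put[OF vc, of M] i by (simp add: ts'_def x_def c_def map_update) (metis list_update_id nth_map)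
  have xin: "in_tree M True x" using hrun_in[OF Cons.prems(1) in_tree_subt[OF ic vc]] by (simp add: x_def)
  have ts'in: "\<forall>c'\<in>set ts'. in_tree M True c'"
  proof
    fix c' assume "c' \<in> set ts'"
    then have "c' = put u c x \<or> c' \<in> set ts" unfolding ts'_def using set_update_subset_insert by fastforce
    then show "in_tree M True c'"
      using in_tree_put[OF in_tree_True[OF ic] vc xin] Cons.prems t a in_tree_True by auto
  qed
  have wf: "wf_rhs M (length ts) (rkQ M q) (rules M q \<sigma> (map (hrun M) ts))"
    using okM_rule[OF Cons.prems(1), of False \<sigma> ts q] Cons.prems t a by simp
  have gI: "\<forall>q\<in>states M. good (states M) (rkQ M) (rkQ M q) (Mev M (subt u c) q)"
    by (intro ballI Mev_good[OF Cons.prems(1) in_tree_True[OF in_tree_subt[OF ic vc]]])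
  have cond: "\<forall>j<length ts. \<forall>q\<in>states M. good (states M) (rkQ M) (rkQ M q) ((map (Mev M) ts' ! j) q) \<and>
      repl (Mev M (subt u c)) ((map (Mev M) ts' ! j) q) = (map (Mev M) ts ! j) q"
  proof (intro allI impI ballI conjI)
    fix j q assume j: "j < length ts" and q: "q \<in> states M"
    have "length ts' = length ts" by (simp add: ts'_def)
    then show "good (states M) (rkQ M) (rkQ M q) ((map (Mev M) ts' ! j) q)"
      using Mev_good[OF Cons.prems(1) _ q] ts'in j by simp
    show "repl (Mev M (subt u c)) ((map (Mev M) ts' ! j) q) = (map (Mev M) ts ! j) q"
    proof (cases "j = i")
      case True
      then show ?thesis using Cons.IH[OF Cons.prems(1) vc ic q] i j
        by (simp add: ts'_def x_def c_def)
    next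
      case False
      have "in_tree M False (ts ! j)" using Cons.prems t a j by auto
      then show ?thesis using False j Mev_noState[OF Cons.prems(1) _ q]
        by (simp add: ts'_def repl_id)
    qed
  qed
  have "repl (Mev M (subt u c)) (Mev M (Nd (In \<sigma>) ts') q) = Mev M (Nd (In \<sigma>) ts) q"
    using evrhs_repl[OF wf _ _ cond gI] hr by (simp add: ts'_def)
  then show ?case using put t a c_def x_def by simp
qed


section \<open>Counting tags on paths\<close>

fun tagof :: "('q,'p,'d \<times> nat list) olab \<Rightarrow> nat list option" where
  "tagof (ODelta dv) = Some (snd dv)"
| "tagof _ = None"

definition cnt :: "nat list \<Rightarrow> ('q,'p,'d \<times> nat list) olab list \<Rightarrow> nat" where
  "cnt v \<pi> = count_list (map tagof \<pi>) (Some v)"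

definition nest :: "('q,'p,'e) olab list \<Rightarrow> nat" where
  "nest \<pi> = length (filter is_state_lab \<pi>)"

lemma cnt_Cons: "cnt v (a # \<pi>) = (if tagof a = Some v then 1 else 0) + cnt v \<pi>"
  by (simp add: cnt_def)

lemma cnt_append: "cnt v (\<pi> @ \<rho>) = cnt v \<pi> + cnt v \<rho>"
  by (simp add: cnt_def)

lemma cnt_zero: "(\<forall>a\<in>labels T. tagof a \<noteq> Some v) \<Longrightarrow> \<pi> \<in> paths T \<Longrightarrow> cnt v \<pi> = 0"
  using paths_labels[of \<pi> T] unfolding cnt_def by (auto simp: count_list_0_iff)

lemma evrhs_cnt:
  "wf_rhs M k m r \<Longrightarrow> length F = k \<Longrightarrow>
   (\<forall>i<k. \<forall>q\<in>states M. good (states M) (rkQ M) (rkQ M q) ((F!i) q)) \<Longrightarrow>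
   (\<forall>i<k. \<forall>q\<in>states M. \<forall>a\<in>labels ((F!i) q). tagof a \<noteq> Some v) \<Longrightarrow>
   \<pi> \<in> paths (evrhs F r) \<Longrightarrow> cnt v \<pi> \<le> theight r"
proof (induction r arbitrary: \<pi>)
  case (Nd b ts)
  show ?case
  proof (cases b)
    case (Out d)
    show ?thesis
    proof (cases "ts = []")
      case True then show ?thesis using Nd.prems Out by (simp add: cnt_def)
    next
      case False
      then obtain c \<pi>1 where c: "c \<in> set ts" "\<pi>1 \<in> paths (evrhs F c)" "\<pi> = ODelta d # \<pi>1"
        using Nd.prems Out by auto
      have "cnt v \<pi>1 \<le> theight c" using Nd.IH[OF c(1)] Nd.prems Out c by auto
      then show ?thesis using theight_child[OF c(1), of b] c(3) by (simp add: cnt_Cons)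
    qed
  next
    case (Call q i)
    let ?J = "(F ! (i - 1)) q"
    have q: "q \<in> states M" and i: "1 \<le> i" "i \<le> k" and l: "length ts = rkQ M q"
      using Nd.prems Call by auto
    have g: "good (states M) (rkQ M) (rkQ M q) ?J" using Nd.prems q i by auto
    have ik: "i - 1 < k" using i by simp
    have nt: "\<forall>a\<in>labels ?J. tagof a \<noteq> Some v" using Nd.prems(4) ik q by blast
    have lm: "length (map (evrhs F) ts) = rkQ M q" using l by simp
    have "\<pi> \<in> paths (osubst (map (evrhs F) ts) ?J)" using Nd.prems Call by simp
    from osubst_paths[OF g lm this]
    show ?thesis
    proof (elim disjE exE conjE)
      assume "\<pi> \<in> paths ?J" then show ?thesis using cnt_zero[OF nt] by simp
    next
      fix \<rho> j \<sigma> assume a: "\<rho> @ [OPar j] \<in> paths ?J" "1 \<le> j" "j \<le> rkQ M q"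
        "\<sigma> \<in> paths (map (evrhs F) ts ! (j - 1))" "\<pi> = \<rho> @ \<sigma>"
      have "cnt v (\<rho> @ [OPar j]) = 0" using cnt_zero[OF nt a(1)] .
      hence r0: "cnt v \<rho> = 0" by (simp add: cnt_append)
      have jl: "j - 1 < length ts" using a l by auto
      hence cm: "ts ! (j-1) \<in> set ts" by simp
      have "cnt v \<sigma> \<le> theight (ts ! (j-1))"
        using Nd.IH[OF cm] Nd.prems Call a(4) jl by auto
      then show ?thesis using theight_child[OF cm, of b] a(5) r0 Call by (simp add: cnt_append)
    qed
  next
    case (Par j) then show ?thesis using Nd.prems by (simp add: cnt_def)
  qed
qed

lemma repl_cnt:
  "good S rk m T \<Longrightarrow> (\<forall>q\<in>S. good S rk (rk q) (I q) \<and> (\<forall>\<pi>\<in>paths (I q). cnt v \<pi> \<le> K)) \<Longrightarrow>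
   (\<forall>a\<in>labels T. tagof a \<noteq> Some v) \<Longrightarrow> \<pi> \<in> paths (repl I T) \<Longrightarrow>
   \<exists>\<pi>'\<in>paths T. cnt v \<pi> \<le> K * nest \<pi>'"
proof (induction T arbitrary: \<pi>)
  case (Nd b cs)
  show ?case
  proof (cases "is_state_lab b")
    case False
    hence rp: "repl I (Nd b cs) = Nd b (map (repl I) cs)" by (cases b) auto
    show ?thesis
    proof (cases "cs = []")
      case True
      then show ?thesis using Nd.prems rp by (auto simp: cnt_def)
    next
      case ne: False
      then obtain c \<pi>1 where c: "c \<in> set cs" "\<pi>1 \<in> paths (repl I c)" "\<pi> = b # \<pi>1"
        using Nd.prems rp by auto
      obtain \<pi>' where p': "\<pi>' \<in> paths c" "cnt v \<pi>1 \<le> K * nest \<pi>'"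
        using Nd.IH[OF c(1) good_child[OF Nd.prems(1) c(1)] Nd.prems(2) _ c(2)] Nd.prems(3) c(1) by auto
      have "b # \<pi>' \<in> paths (Nd b cs)" using p' c ne by auto
      moreover have "tagof b \<noteq> Some v" using Nd.prems by auto
      ultimately show ?thesis using p' c by (intro bexI[of _ "b # \<pi>'"]) (auto simp: cnt_Cons nest_def)
    qed
  next
    case True
    then obtain q p where b: "b = OState q p" by (cases b) auto
    have q: "q \<in> S" and l: "length cs = rk q" using Nd.prems b by auto
    have gI: "good S rk (rk q) (I q)" and KI: "\<forall>\<pi>\<in>paths (I q). cnt v \<pi> \<le> K" using Nd.prems q by auto
    have lm: "length (map (repl I) cs) = rk q" using l by simp
    have "\<pi> \<in> paths (osubst (map (repl I) cs) (I q))" using Nd.prems b by simp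
    from osubst_paths[OF gI lm this]
    show ?thesis
    proof (elim disjE exE conjE)
      assume "\<pi> \<in> paths (I q)"
      hence c1: "cnt v \<pi> \<le> K" using KI by auto
      obtain \<pi>' where "\<pi>' \<in> paths (Nd b cs)" using paths_ne by blast
      moreover then obtain \<pi>'' where "\<pi>' = b # \<pi>''" by (auto split: if_splits)
      ultimately show ?thesis using c1 b by (intro bexI[of _ \<pi>']) (auto simp: nest_def)
    next
      fix \<rho> j \<sigma> assume a: "\<rho> @ [OPar j] \<in> paths (I q)" "1 \<le> j" "j \<le> rk q"
        "\<sigma> \<in> paths (map (repl I) cs ! (j - 1))" "\<pi> = \<rho> @ \<sigma>"
      have "cnt v (\<rho> @ [OPar j]) \<le> K" using KI a(1) by blast
      hence r0: "cnt v \<rho> \<le> K" by (simp add: cnt_append)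
      have jl: "j - 1 < length cs" using a l by auto
      hence cm: "cs ! (j-1) \<in> set cs" by simp
      have ntc: "\<forall>a\<in>labels (cs!(j-1)). tagof a \<noteq> Some v" using Nd.prems(3) cm by auto
      have sp: "\<sigma> \<in> paths (repl I (cs ! (j-1)))" using a(4) jl by simp
      obtain \<pi>' where p': "\<pi>' \<in> paths (cs ! (j-1))" "cnt v \<sigma> \<le> K * nest \<pi>'"
        using Nd.IH[OF cm good_child[OF Nd.prems(1) cm] Nd.prems(2) ntc sp] by auto
      have "b # \<pi>' \<in> paths (Nd b cs)" using p' cm by (cases cs) auto
      then show ?thesis using p' r0 a(5) b by (intro bexI[of _ "b # \<pi>'"]) (auto simp: cnt_append nest_def)
    qed
  qed
qed


section \<open>Annotated transducer\<close>

fun annl :: "nat list \<Rightarrow> ('s,'p) ilab \<Rightarrow> ('s \<times> nat list,'p) ilab" where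
  "annl v (In \<sigma>) = In (\<sigma>, v)"
| "annl v (LA p) = LA p"

function ann :: "nat list \<Rightarrow> ('s,'p) ilab rtree \<Rightarrow> ('s \<times> nat list,'p) ilab rtree" where
  "ann v (Nd a ts) = Nd (annl v a) (map (\<lambda>i. ann (v@[i]) (ts!i)) [0..<length ts])"
  by pat_completeness auto
termination
  by (relation "measure (\<lambda>(v,t). size t)") (auto intro!: le_imp_less_Suc size_list_estimation'[OF nth_mem])

definition tagr :: "nat list \<Rightarrow> ('q,'d) rlab rtree \<Rightarrow> ('q,'d \<times> nat list) rlab rtree" where
  "tagr v r = map_rtree (map_rlab id (\<lambda>d. (d,v))) r"

definition annM :: "('q,'p,'s,'d) mttr \<Rightarrow> ('q,'p,'s \<times> nat list,'d \<times> nat list) mttr" where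
  "annM M = \<lparr>states = states M, rkQ = rkQ M, lastates = lastates M, inp = {x. fst x \<in> inp M},
     rkI = \<lambda>x. rkI M (fst x), outp = {x. fst x \<in> outp M}, rkO = \<lambda>x. rkO M (fst x),
     init = init M, rules = \<lambda>q x ps. tagr (snd x) (rules M q (fst x) ps), la = \<lambda>x ps. la M (fst x) ps\<rparr>"

lemma annM_simps[simp]: "states (annM M) = states M" "rkQ (annM M) = rkQ M" "lastates (annM M) = lastates M"
  "inp (annM M) = {x. fst x \<in> inp M}" "rkI (annM M) = (\<lambda>x. rkI M (fst x))" "outp (annM M) = {x. fst x \<in> outp M}"
  "rkO (annM M) = (\<lambda>x. rkO M (fst x))" "init (annM M) = init M"
  "rules (annM M) q x ps = tagr (snd x) (rules M q (fst x) ps)" "la (annM M) x ps = la M (fst x) ps"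
  by (simp_all add: annM_def)

lemma wf_rhs_tagr: "wf_rhs M k m r \<Longrightarrow> wf_rhs (annM M) k m (tagr v r)"
proof (induction r)
  case (Nd a ts) then show ?case by (cases a) (auto simp: tagr_def)
qed

lemma okM_annM: "okM M \<Longrightarrow> okM (annM M)"
  unfolding okM_def by (auto intro: wf_rhs_tagr)

lemma theight_tagr: "theight (tagr v r) = theight r"
  by (simp add: tagr_def theight_map)

lemma in_tree_ann: "in_tree M w t \<Longrightarrow> in_tree (annM M) w (ann v t)"
proof (induction v t rule: ann.induct)
  case (1 v a ts) then show ?case by (cases a) auto
qed

lemma hrun_ann: "hrun (annM M) (ann v t) = hrun M t"
proof (induction v t rule: ann.induct)
  case (1 v a ts)
  show ?case
  proof (cases a)
    case (In \<sigma>)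
    have "map (hrun (annM M)) (map (\<lambda>i. ann (v @ [i]) (ts ! i)) [0..<length ts]) = map (hrun M) ts"
      using 1 by (auto intro: nth_equalityI)
    then show ?thesis using In by simp
  qed simp
qed

lemma erase_ann: "map_rtree (map_ilab fst id) (ann v t) = t"
proof (induction v t rule: ann.induct)
  case (1 v a ts)
  have "map (map_rtree (map_ilab fst id)) (map (\<lambda>i. ann (v @ [i]) (ts ! i)) [0..<length ts]) = ts"
    using 1 by (intro nth_equalityI) (simp_all add: id_def)
  then show ?case by (cases a) (simp_all add: id_def)
qed

lemma vp_ann: "vp u (ann v t) = vp u t"
proof (induction u arbitrary: v t)
  case (Cons i u)
  obtain a ts where t: "t = Nd a ts" by (cases t)
  show ?case using Cons t by auto
qed simp

lemma subt_ann: "vp u t \<Longrightarrow> subt u (ann v t) = ann (v @ u) (subt u t)"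
proof (induction u arbitrary: v t)
  case (Cons i u)
  obtain a ts where t: "t = Nd a ts" by (cases t)
  show ?case using Cons t by auto
qed simp

lemma map_put: "vp u T \<Longrightarrow> map_rtree f (put u T x) = put u (map_rtree f T) (map_rtree f x)"
proof (induction u arbitrary: T)
  case (Cons i u)
  obtain a ts where t: "T = Nd a ts" by (cases T)
  show ?case using Cons t by (auto simp: map_update)
qed simp

lemma labels_ann: "In x \<in> labels (ann v t) \<Longrightarrow> \<exists>z. snd x = v @ z \<and> vp z t"
proof (induction v t rule: ann.induct)
  case (1 v a ts)
  show ?case
  proof (cases "In x = annl v a")
    case True then show ?thesis by (cases a) auto
  next
    case False
    then obtain i where i: "i < length ts" "In x \<in> labels (ann (v @ [i]) (ts ! i))" using 1 by auto
    then obtain z where "snd x = (v @ [i]) @ z" "vp z (ts ! i)" using 1 by auto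
    then show ?thesis using i by (intro exI[of _ "i # z"]) auto
  qed
qed


lemma labels_put_ann: "vp u t \<Longrightarrow> In x \<in> labels (put u (ann v t) (Nd (LA p) [])) \<Longrightarrow> snd x \<noteq> v @ u"
proof (induction u arbitrary: v t)
  case Nil then show ?case by simp
next
  case (Cons i u)
  obtain a ts where t: "t = Nd a ts" by (cases t)
  have i: "i < length ts" and vu: "vp u (ts ! i)" using Cons.prems t by auto
  let ?ats = "map (\<lambda>j. ann (v @ [j]) (ts ! j)) [0..<length ts]"
  have put: "put (i # u) (ann v t) (Nd (LA p) []) =
      Nd (annl v a) (?ats[i := put u (ann (v @ [i]) (ts ! i)) (Nd (LA p) [])])"
    using t i by simp
  from Cons.prems(2) put consider "In x = annl v a"
    | "In x \<in> labels (put u (ann (v @ [i]) (ts ! i)) (Nd (LA p) []))"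
    | j where "j < length ts" "j \<noteq> i" "In x \<in> labels (ann (v @ [j]) (ts ! j))"
  proof -
    assume h1: "In x = annl v a \<Longrightarrow> thesis"
      and h2: "In x \<in> labels (put u (ann (v @ [i]) (ts ! i)) (Nd (LA p) [])) \<Longrightarrow> thesis"
      and h3: "\<And>j. j < length ts \<Longrightarrow> j \<noteq> i \<Longrightarrow> In x \<in> labels (ann (v @ [j]) (ts ! j)) \<Longrightarrow> thesis"
    assume "In x \<in> labels (put (i # u) (ann v t) (Nd (LA p) []))"
    hence "In x = annl v a \<or> (\<exists>c\<in>set (?ats[i := put u (ann (v @ [i]) (ts ! i)) (Nd (LA p) [])]). In x \<in> labels c)"
      using put by simp
    then show thesis
    proof (elim disjE bexE)
      fix c assume c: "c \<in> set (?ats[i := put u (ann (v @ [i]) (ts ! i)) (Nd (LA p) [])])" "In x \<in> labels c"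
      then obtain j where j: "j < length ts" "c = (?ats[i := put u (ann (v @ [i]) (ts ! i)) (Nd (LA p) [])]) ! j"
        by (auto simp: in_set_conv_nth)
      show thesis
      proof (cases "j = i")
        case True then show ?thesis using h2 c j i by simp
      next
        case False then show ?thesis using h3[of j] c j by simp
      qed
    qed (use h1 in auto)
  qed
  then show ?case
  proof cases
    case 1 then show ?thesis by (cases a) auto
  next
    case 2 then show ?thesis using Cons.IH[OF vu, of "v @ [i]"] by simp
  next
    case 3
    then obtain z where "snd x = (v @ [j]) @ z" using labels_ann by blast
    then show ?thesis using 3 by auto
  qed
qed

lemma count_LA_real: "in_tree M False t \<Longrightarrow> count_nodes is_LA t = 0"
proof (induction t)
  case (Nd a ts) then show ?case by (cases a) auto
qed

lemma sum_list_update_zero: "(\<forall>c\<in>set ts. f c = (0::nat)) \<Longrightarrow> i < length ts \<Longrightarrow> sum_list (map f (ts[i := y])) = f y"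
proof (induction ts arbitrary: i)
  case (Cons c ts) then show ?case by (cases i) auto
qed simp

lemma count_LA_put: "in_tree M False t \<Longrightarrow> vp u t \<Longrightarrow> count_nodes is_LA (put u t x) = count_nodes is_LA x"
proof (induction u arbitrary: t)
  case (Cons i u)
  obtain a ts where t: "t = Nd a ts" by (cases t)
  then obtain \<sigma> where a: "a = In \<sigma>" using Cons.prems by (cases a) auto
  have i: "i < length ts" and vu: "vp u (ts ! i)" using Cons.prems t by auto
  have iti: "in_tree M False (ts ! i)" using Cons.prems t a i by auto
  have z: "\<forall>c\<in>set ts. count_nodes is_LA c = 0" using Cons.prems t a count_LA_real by auto
  have "sum_list (map (count_nodes is_LA) (ts[i := put u (ts ! i) x])) = count_nodes is_LA (put u (ts ! i) x)"
    by (rule sum_list_update_zero[OF z i])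
  also have "\<dots> = count_nodes is_LA x" by (rule Cons.IH[OF iti vu])
  finally have "sum_list (map (count_nodes is_LA) (ts[i := put u (ts ! i) x])) = count_nodes is_LA x" .
  then show ?case using t a by simp
qed simp

lemma vp_finite_card: "finite {u. vp u t} \<and> card {u. vp u t} \<le> tsize t"
proof (induction t)
  case (Nd a ts)
  let ?X = "\<Union>i\<in>{..<length ts}. (Cons i) ` {u. vp u (ts ! i)}"
  have eq: "{u. vp u (Nd a ts)} = insert [] ?X"
  proof (intro set_eqI iffI)
    fix u assume "u \<in> {u. vp u (Nd a ts)}"
    then show "u \<in> insert [] ?X"
      by (cases u) auto
  qed auto
  have IH: "finite {u. vp u (ts ! i)} \<and> card {u. vp u (ts ! i)} \<le> tsize (ts ! i)" if "i < length ts" for i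
    using Nd.IH[OF nth_mem[OF that]] .
  have finX: "finite ?X" using IH by auto
  have fin: "finite {u. vp u (Nd a ts)}" unfolding eq using finX by simp
  have "card ?X \<le> (\<Sum>i<length ts. card ((Cons i) ` {u. vp u (ts ! i)}))"
    by (rule card_UN_le) simp
  also have "\<dots> \<le> (\<Sum>i<length ts. tsize (ts ! i))"
  proof (intro sum_mono)
    fix i assume "i \<in> {..<length ts}"
    then have i: "i < length ts" by simp
    have "card ((Cons i) ` {u. vp u (ts ! i)}) \<le> card {u. vp u (ts ! i)}"
      using card_image_le[OF conjunct1[OF IH[OF i]]] .
    then show "card ((Cons i) ` {u. vp u (ts ! i)}) \<le> tsize (ts ! i)" using IH[OF i] by linarith
  qed
  also have "\<dots> = sum_list (map tsize ts)"
    by (simp add: sum_list_sum_nth atLeast0LessThan)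
  finally have c1: "card ?X \<le> sum_list (map tsize ts)" .
  have "card (insert [] ?X) \<le> Suc (card ?X)" using card_insert_if[OF finX, of "[]"] by simp
  then have "card {u. vp u (Nd a ts)} \<le> 1 + sum_list (map tsize ts)" unfolding eq using c1 by linarith
  then show ?case using fin by simp
qed

section \<open>Erasure of annotations\<close>

lemma tagr_Nd: "tagr v (Nd a ts) = Nd (map_rlab id (\<lambda>d. (d,v)) a) (map (tagr v) ts)"
  by (simp add: tagr_def)

lemma osubst_map:
  "good S rk n J \<Longrightarrow> length args = n \<Longrightarrow>
   map_rtree (map_olab id id f) (osubst args J) = osubst (map (map_rtree (map_olab id id f)) args) (map_rtree (map_olab id id f) J)"
proof (induction J)
  case (Nd a ts) then show ?case by (cases a) auto
qed

lemma evrhs_erase: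
  "wf_rhs M k m r \<Longrightarrow> length F = k \<Longrightarrow> length F' = k \<Longrightarrow>
   (\<forall>i<k. \<forall>q\<in>states M. good (states M) (rkQ M) (rkQ M q) ((F'!i) q) \<and> (F!i) q = map_rtree (map_olab id id fst) ((F'!i) q)) \<Longrightarrow>
   evrhs F r = map_rtree (map_olab id id fst) (evrhs F' (tagr v r))"
proof (induction r)
  case (Nd a ts)
  show ?case
  proof (cases a)
    case (Call q i)
    have q: "q \<in> states M" and i: "1 \<le> i" "i \<le> k" and l: "length ts = rkQ M q"
      using Nd.prems Call by auto
    have ik: "i - 1 < k" using i by simp
    have g: "good (states M) (rkQ M) (rkQ M q) ((F' ! (i - 1)) q)" using Nd.prems(4) ik q by blast
    have F: "(F ! (i - 1)) q = map_rtree (map_olab id id fst) ((F' ! (i - 1)) q)" using Nd.prems(4) ik q by blast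
    have "map_rtree (map_olab id id fst) (evrhs F' (tagr v (Nd a ts))) =
      map_rtree (map_olab id id fst) (osubst (map (evrhs F' \<circ> tagr v) ts) ((F' ! (i - 1)) q))"
      using Call by (simp add: tagr_Nd)
    also have "\<dots> = osubst (map (map_rtree (map_olab id id fst)) (map (evrhs F' \<circ> tagr v) ts)) (map_rtree (map_olab id id fst) ((F' ! (i - 1)) q))"
      by (rule osubst_map[OF g]) (simp add: l)
    also have "map (map_rtree (map_olab id id fst)) (map (evrhs F' \<circ> tagr v) ts) = map (evrhs F) ts"
      using Nd Call by (auto simp: id_def intro!: map_cong)
    finally show ?thesis using Call F by (simp add: id_def)
  next
    case (Out d) then show ?thesis using Nd by (auto simp: tagr_Nd intro!: map_cong)
  next
    case (Par j) then show ?thesis using Nd by (auto simp: tagr_Nd)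
  qed
qed

lemma hrun_erase: "hrun M (map_rtree (map_ilab fst id) s) = hrun (annM M) s"
proof (induction s)
  case (Nd a ts) then show ?case by (cases a) (auto intro!: arg_cong[where f="la M _"] map_cong)
qed

lemma in_tree_erase: "in_tree (annM M) w s \<Longrightarrow> in_tree M w (map_rtree (map_ilab fst id) s)"
proof (induction s)
  case (Nd a ts) then show ?case by (cases a) auto
qed

lemma Mev_erase:
  "okM M \<Longrightarrow> in_tree (annM M) True s \<Longrightarrow> q \<in> states M \<Longrightarrow>
   Mev M (map_rtree (map_ilab fst id) s) q = map_rtree (map_olab id id fst) (Mev (annM M) s q)"
proof (induction s arbitrary: q)
  case (Nd a ts)
  show ?case
  proof (cases a)
    case (In x)
    let ?e = "map_rtree (map_ilab fst id)"
    have it: "in_tree M True (Nd (In (fst x)) (map ?e ts))"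
      using in_tree_erase[OF Nd.prems(2)] In by simp
    have wf: "wf_rhs M (length (map ?e ts)) (rkQ M q) (rules M q (fst x) (map (hrun M) (map ?e ts)))"
      using okM_rule[OF Nd.prems(1) it Nd.prems(3)] .
    have hr: "map (hrun M) (map ?e ts) = map (hrun (annM M)) ts"
      by (simp add: hrun_erase)
    have cond: "\<forall>i<length ts. \<forall>q\<in>states M. good (states M) (rkQ M) (rkQ M q) ((map (Mev (annM M)) ts ! i) q) \<and>
       (map (Mev M) (map ?e ts) ! i) q = map_rtree (map_olab id id fst) ((map (Mev (annM M)) ts ! i) q)"
    proof (intro allI impI ballI conjI)
      fix i q assume i: "i < length ts" and q: "q \<in> states M"
      have iti: "in_tree (annM M) True (ts ! i)" using Nd.prems(2) In i by auto
      show "good (states M) (rkQ M) (rkQ M q) ((map (Mev (annM M)) ts ! i) q)"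
        using Mev_good[OF okM_annM[OF Nd.prems(1)] iti] q i by simp
      show "(map (Mev M) (map ?e ts) ! i) q = map_rtree (map_olab id id fst) ((map (Mev (annM M)) ts ! i) q)"
        using Nd.IH[OF nth_mem[OF i] Nd.prems(1) iti q] i by (simp add: id_def)
    qed
    have main: "evrhs (map (Mev M) (map ?e ts)) (rules M q (fst x) (map (hrun (annM M)) ts)) =
      map_rtree (map_olab id id fst) (evrhs (map (Mev (annM M)) ts) (tagr (snd x) (rules M q (fst x) (map (hrun (annM M)) ts))))"
      by (rule evrhs_erase[OF wf[unfolded hr]]) (use cond in auto)
    have e1: "?e (Nd a ts) = Nd (In (fst x)) (map ?e ts)" using In by simp
    have e2: "Mev M (Nd (In (fst x)) (map ?e ts)) q = evrhs (map (Mev M) (map ?e ts)) (rules M q (fst x) (map (hrun M) (map ?e ts)))"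
      by (simp only: Mev.simps)
    have e3: "Mev (annM M) (Nd a ts) q = evrhs (map (Mev (annM M)) ts) (tagr (snd x) (rules M q (fst x) (map (hrun (annM M)) ts)))"
      using In by simp
    show ?thesis unfolding e1 e2 e3 hr by (rule main)
  next
    case (LA p) then show ?thesis by simp
  qed
qed

lemma Out_tagr: "Out d \<in> labels (tagr v r) \<Longrightarrow> snd d = v"
proof (induction r)
  case (Nd a ts) then show ?case by (cases a) (auto simp: tagr_Nd)
qed

lemma Mev_tags:
  "okM M \<Longrightarrow> in_tree (annM M) True s \<Longrightarrow> q \<in> states M \<Longrightarrow> a \<in> labels (Mev (annM M) s q) \<Longrightarrow>
   tagof a = Some w \<Longrightarrow> \<exists>x. In x \<in> labels s \<and> snd x = w"
proof (induction s arbitrary: q a)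
  case (Nd b ts)
  show ?case
  proof (cases b)
    case (In x)
    have ok': "okM (annM M)" using okM_annM[OF Nd.prems(1)] .
    have wf: "wf_rhs (annM M) (length ts) (rkQ M q) (rules (annM M) q x (map (hrun (annM M)) ts))"
      using okM_rule[OF ok', of True x ts q] Nd.prems In by simp
    have gF: "\<forall>i<length ts. \<forall>q\<in>states (annM M). good (states (annM M)) (rkQ (annM M)) (rkQ (annM M) q) ((map (Mev (annM M)) ts ! i) q)"
      using Nd.prems In Mev_good[OF ok'] by fastforce
    have "(\<exists>d. Out d \<in> labels (rules (annM M) q x (map (hrun (annM M)) ts)) \<and> a = ODelta d) \<or> (\<exists>j. a = OPar j) \<or>
          (\<exists>i<length ts. \<exists>q\<in>states (annM M). a \<in> labels ((map (Mev (annM M)) ts ! i) q))"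
      using evrhs_labels[OF wf _ gF] Nd.prems In by auto
    moreover have ?thesis if "Out d \<in> labels (rules (annM M) q x (map (hrun (annM M)) ts))" "a = ODelta d" for d
    proof -
      have "snd d = snd x" using that Out_tagr[of d "snd x"] by simp
      then show ?thesis using that Nd.prems In by (intro exI[of _ x]) auto
    qed
    moreover have ?thesis if "i < length ts" "q' \<in> states M" "a \<in> labels ((map (Mev (annM M)) ts ! i) q')" for i q'
    proof -
      have "\<exists>x. In x \<in> labels (ts ! i) \<and> snd x = w"
        using Nd.IH[OF nth_mem[OF that(1)] Nd.prems(1) _ that(2) _ Nd.prems(5)] that Nd.prems In by auto
      then obtain y where y: "In y \<in> labels (ts ! i)" "snd y = w" by blast
      show ?thesis using nth_mem[OF that(1)] y by (intro exI[of _ y]) auto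
    qed
    ultimately show ?thesis using Nd.prems by auto
  next
    case (LA p) then show ?thesis using Nd.prems by auto
  qed
qed

lemma good_labels: "good S rk m T \<Longrightarrow> a \<in> labels T \<Longrightarrow>
  (case a of OPar j \<Rightarrow> 1 \<le> j \<and> j \<le> m | Dollar \<Rightarrow> False | _ \<Rightarrow> True)"
proof (induction T)
  case (Nd b ts) then show ?case by (cases b) auto
qed


definition Rset :: "('q,'p,'s,'d) mttr \<Rightarrow> ('q,'d) rlab rtree set" where
  "Rset M = (\<Union>q\<in>states M. \<Union>\<sigma>\<in>inp M. (rules M q \<sigma>) ` {ps. set ps \<subseteq> lastates M \<and> length ps = rkI M \<sigma>})"

definition Rb :: "('q,'p,'s,'d) mttr \<Rightarrow> nat" where
  "Rb M = Max (insert 0 (theight ` Rset M))"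

lemma R_bound: "wf_mttr M \<Longrightarrow> q \<in> states M \<Longrightarrow> \<sigma> \<in> inp M \<Longrightarrow> set ps \<subseteq> lastates M \<Longrightarrow>
  length ps = rkI M \<sigma> \<Longrightarrow> theight (rules M q \<sigma> ps) \<le> Rb M"
proof -
  assume wf: "wf_mttr M" and a: "q \<in> states M" "\<sigma> \<in> inp M" "set ps \<subseteq> lastates M" "length ps = rkI M \<sigma>"
  have fin: "finite (Rset M)" unfolding Rset_def
    using wf unfolding wf_mttr_def by (auto intro!: finite_UN_I finite_imageI finite_lists_length_eq)
  have "rules M q \<sigma> ps \<in> Rset M" unfolding Rset_def using a by auto
  then show ?thesis unfolding Rb_def using fin by (intro Max_ge) auto
qed

lemma inst_cnt:
  assumes ok: "okM M" and s: "in_tree M False s" and q: "q \<in> states M"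
    and R: "\<And>q \<sigma> ps. q \<in> states M \<Longrightarrow> \<sigma> \<in> inp M \<Longrightarrow> set ps \<subseteq> lastates M \<Longrightarrow> length ps = rkI M \<sigma> \<Longrightarrow>
       theight (rules M q \<sigma> ps) \<le> R"
    and \<pi>: "\<pi> \<in> paths (Mev (annM M) (ann u s) q)"
  shows "cnt u \<pi> \<le> R"
proof -
  obtain a cs where sa: "s = Nd a cs" by (cases s)
  then obtain \<sigma> where a: "a = In \<sigma>" using s by (cases a) auto
  have \<sigma>: "\<sigma> \<in> inp M" and lcs: "length cs = rkI M \<sigma>" and csin: "\<forall>c\<in>set cs. in_tree M False c"
    using s sa a by auto
  define acs where "acs = map (\<lambda>i. ann (u @ [i]) (cs ! i)) [0..<length cs]"
  have annu: "ann u s = Nd (In (\<sigma>, u)) acs" using sa a acs_def by simp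
  have ok': "okM (annM M)" using okM_annM[OF ok] .
  have itA: "in_tree (annM M) False (ann u s)" using in_tree_ann[OF s] .
  have acsin: "\<forall>c\<in>set acs. in_tree (annM M) True c" using itA annu in_tree_True by auto
  define ps where "ps = map (hrun (annM M)) acs"
  have wf: "wf_rhs (annM M) (length acs) (rkQ M q) (tagr u (rules M q \<sigma> ps))"
    using okM_rule[OF ok' itA[unfolded annu]] q by (simp add: ps_def)
  have ev: "Mev (annM M) (ann u s) q = evrhs (map (Mev (annM M)) acs) (tagr u (rules M q \<sigma> ps))"
    using annu by (simp add: ps_def)
  have gF: "\<forall>i<length acs. \<forall>q\<in>states (annM M). good (states (annM M)) (rkQ (annM M)) (rkQ (annM M) q) ((map (Mev (annM M)) acs ! i) q)"
    using acsin Mev_good[OF ok'] by fastforce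
  have tF: "\<forall>i<length acs. \<forall>q\<in>states (annM M). \<forall>a\<in>labels ((map (Mev (annM M)) acs ! i) q). tagof a \<noteq> Some u"
  proof (intro allI impI ballI notI)
    fix i q' b assume i: "i < length acs" and q': "q' \<in> states (annM M)"
      and b: "b \<in> labels ((map (Mev (annM M)) acs ! i) q')" and tb: "tagof b = Some u"
    have iti: "in_tree (annM M) True (acs ! i)" using acsin i by auto
    have q'': "q' \<in> states M" using q' by simp
    have b': "b \<in> labels (Mev (annM M) (acs ! i) q')" using b i by simp
    obtain x where x: "In x \<in> labels (acs ! i)" "snd x = u"
      using Mev_tags[OF ok iti q'' b' tb] by blast
    have "acs ! i = ann (u @ [i]) (cs ! i)" using i acs_def by simp
    then obtain z where "snd x = (u @ [i]) @ z" using labels_ann x(1) by metis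
    then show False using x(2) by simp
  qed
  have "cnt u \<pi> \<le> theight (tagr u (rules M q \<sigma> ps))"
    using evrhs_cnt[OF wf _ gF tF] \<pi> ev by simp
  also have "\<dots> \<le> R"
  proof -
    have "set ps \<subseteq> lastates M" using hrun_in[OF ok'] acsin by (auto simp: ps_def)
    moreover have "length ps = rkI M \<sigma>" using lcs by (simp add: ps_def acs_def)
    ultimately show ?thesis using R[OF q \<sigma>] by (simp add: theight_tagr)
  qed
  finally show ?thesis .
qed


lemma is_state_map: "is_state_lab (map_olab f g h a) = is_state_lab a"
  by (cases a) auto

lemma nesting_map: "nesting (map (map_olab f g h) \<pi>) = nest \<pi>"
  unfolding nesting_def nest_def by (induction \<pi>) (auto simp: is_state_map)

theorem mainTheorem4:
  fixes M :: "('q,'p,'s,'d) mttr"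
  assumes "wf_mttr M"
    and "depth_proper M"
    and "finite_nesting M"
  shows "LSHI M"
proof -
  have ok: "okM M" using assms(1) unfolding wf_mttr_def okM_def by blast
  have init: "init M \<in> states M" "rkQ M (init M) = 0" using assms(1) unfolding wf_mttr_def by auto
  obtain b where b: "\<forall>t. in_tree M True t \<and> count_nodes is_LA t = 1 \<longrightarrow> (\<forall>\<pi>\<in>paths (Mout M t). nesting \<pi> \<le> b)"
    using assms(3) unfolding finite_nesting_def by blast
  define R where "R = Rb M"
  have Rb: "\<And>q \<sigma> ps. q \<in> states M \<Longrightarrow> \<sigma> \<in> inp M \<Longrightarrow> set ps \<subseteq> lastates M \<Longrightarrow> length ps = rkI M \<sigma> \<Longrightarrow>
      theight (rules M q \<sigma> ps) \<le> R"
    using R_bound[OF assms(1)] R_def by blast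
  have ok': "okM (annM M)" using okM_annM[OF ok] .
  show ?thesis unfolding LSHI_def
  proof (intro exI[of _ "R * b"] allI impI)
    fix t assume t: "in_tree M False t"
    define ta where "ta = ann [] t"
    have tain: "in_tree (annM M) False ta" using in_tree_ann[OF t] ta_def by simp
    have er: "Mout M t = map_rtree (map_olab id id fst) (Mev (annM M) ta (init M))"
      using Mev_erase[OF ok in_tree_True[OF tain] init(1)] erase_ann[of "[]" t] by (simp add: Mout_def Mq_def ta_def)
    have core: "\<forall>u. vp u t \<longrightarrow> (\<forall>\<pi>\<in>paths (Mev (annM M) ta (init M)). cnt u \<pi> \<le> R * b)"
    proof (intro allI impI ballI)
      fix u \<pi> assume u: "vp u t" and \<pi>: "\<pi> \<in> paths (Mev (annM M) ta (init M))"
      have vta: "vp u ta" using vp_ann[of u "[]" t] u unfolding ta_def by simp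
      define p' where "p' = hrun (annM M) (subt u ta)"
      define Cu where "Cu = put u ta (Nd (LA p') [])"
      have dec: "Mev (annM M) ta (init M) = repl (Mev (annM M) (subt u ta)) (Mev (annM M) Cu (init M))"
        using decomp[OF ok' vta tain, of "init M"] init by (simp add: Cu_def p'_def)
      have sub: "subt u ta = ann u (subt u t)" using subt_ann[OF u] ta_def by simp
      have sreal: "in_tree M False (subt u t)" using in_tree_subt[OF t u] .
      have p'in: "p' \<in> lastates M" using hrun_in[OF ok' in_tree_subt[OF tain vta]] p'_def by simp
      have Cuin: "in_tree (annM M) True Cu" unfolding Cu_def
        using in_tree_put[OF in_tree_True[OF tain] vta] p'in by simp
      have gT: "good (states M) (rkQ M) 0 (Mev (annM M) Cu (init M))"
        using Mev_good[OF ok' Cuin, of "init M"] init by simp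
      have gI: "\<forall>q\<in>states M. good (states M) (rkQ M) (rkQ M q) (Mev (annM M) (subt u ta) q) \<and>
          (\<forall>\<pi>\<in>paths (Mev (annM M) (subt u ta) q). cnt u \<pi> \<le> R)"
      proof (intro ballI conjI)
        fix q assume q: "q \<in> states M"
        show "good (states M) (rkQ M) (rkQ M q) (Mev (annM M) (subt u ta) q)"
          using Mev_good[OF ok' in_tree_True[OF in_tree_subt[OF tain vta]], of q] q by simp
        fix \<pi> assume "\<pi> \<in> paths (Mev (annM M) (subt u ta) q)"
        then show "cnt u \<pi> \<le> R" unfolding sub using inst_cnt[OF ok sreal q, of R] Rb by blast
      qed
      have nt: "\<forall>a\<in>labels (Mev (annM M) Cu (init M)). tagof a \<noteq> Some u"
      proof (intro ballI notI)
        fix a assume a: "a \<in> labels (Mev (annM M) Cu (init M))" "tagof a = Some u"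
        obtain x where "In x \<in> labels Cu" "snd x = u" using Mev_tags[OF ok Cuin init(1) a] by blast
        then show False using labels_put_ann[OF u, of x "[]" p'] Cu_def ta_def by simp
      qed
      have \<pi>r: "\<pi> \<in> paths (repl (Mev (annM M) (subt u ta)) (Mev (annM M) Cu (init M)))"
        using \<pi> unfolding dec .
      obtain \<pi>' where \<pi>': "\<pi>' \<in> paths (Mev (annM M) Cu (init M))" "cnt u \<pi> \<le> R * nest \<pi>'"
        using repl_cnt[OF gT gI nt \<pi>r] by blast
      define t' where "t' = put u t (Nd (LA p') [])"
      have eCu: "map_rtree (map_ilab fst id) Cu = t'"
        unfolding Cu_def t'_def ta_def using map_put[of u "ann [] t" "map_ilab fst id"] vp_ann[of u "[]" t] erase_ann[of "[]" t] u
        by simp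
      have t'in: "in_tree M True t'" using in_tree_put[OF in_tree_True[OF t] u] p'in t'_def by simp
      have t'c: "count_nodes is_LA t' = 1" using count_LA_put[OF t u] t'_def by simp
      have mo: "Mout M t' = map_rtree (map_olab id id fst) (Mev (annM M) Cu (init M))"
        using Mev_erase[OF ok Cuin init(1)] eCu by (simp add: Mout_def Mq_def)
      have "map (map_olab id id fst) \<pi>' \<in> map (map_olab id id fst) ` paths (Mev (annM M) Cu (init M))"
        by (rule imageI[OF \<pi>'(1)])
      hence pm: "map (map_olab id id fst) \<pi>' \<in> paths (Mout M t')" unfolding mo paths_map .
      have "\<forall>\<pi>\<in>paths (Mout M t'). nesting \<pi> \<le> b" using spec[OF b, of t'] t'in t'c by simp
      hence "nesting (map (map_olab id id fst) \<pi>') \<le> b" using pm by blast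
      hence "nest \<pi>' \<le> b" by (simp add: nesting_map)
      hence "R * nest \<pi>' \<le> R * b" by (rule mult_le_mono2)
      then show "cnt u \<pi> \<le> R * b" using \<pi>'(2) by linarith
    qed
    have "\<forall>\<pi>\<in>paths (Mev (annM M) ta (init M)). length \<pi> \<le> R * b * tsize t"
    proof
      fix \<pi> assume \<pi>: "\<pi> \<in> paths (Mev (annM M) ta (init M))"
      define P where "P = {u. vp u t}"
      have finP: "finite P" and cardP: "card P \<le> tsize t" using vp_finite_card P_def by auto
      have sub: "set (map tagof \<pi>) \<subseteq> Some ` P"
      proof
        fix y assume "y \<in> set (map tagof \<pi>)"
        then obtain a where a: "a \<in> set \<pi>" "y = tagof a" by auto
        have al: "a \<in> labels (Mev (annM M) ta (init M))" using paths_labels \<pi> a by blast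
        have ns: "\<not> is_state_lab a" using Mev_noState[OF ok' tain _ al] init by simp
        have gl: "case a of OPar j \<Rightarrow> 1 \<le> j \<and> j \<le> 0 | Dollar \<Rightarrow> False | _ \<Rightarrow> True"
          using good_labels[OF Mev_good[OF ok' in_tree_True[OF tain]] al] init by (cases a) auto
        obtain d where ad: "a = ODelta d" using ns gl by (cases a) auto
        then have tg: "tagof a = Some (snd d)" by simp
        obtain x where "In x \<in> labels ta" "snd x = snd d"
          using Mev_tags[OF ok in_tree_True[OF tain] init(1) al tg] by blast
        then obtain z where "snd d = z" "vp z t" using labels_ann ta_def by fastforce
        then show "y \<in> Some ` P" using a tg P_def by auto
      qed
      have "length \<pi> = length (map tagof \<pi>)" by simp
      also have "\<dots> = sum (count_list (map tagof \<pi>)) (Some ` P)" using sum_count_set[OF sub finite_imageI[OF finP]] by simp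
      also have "\<dots> = (\<Sum>u\<in>P. cnt u \<pi>)" by (simp add: sum.reindex cnt_def)
      also have "\<dots> \<le> (\<Sum>u\<in>P. R * b)" using core P_def \<pi> by (intro sum_mono) auto
      also have "\<dots> = card P * (R * b)" by simp
      also have "\<dots> \<le> R * b * tsize t" using cardP by (simp add: mult.commute)
      finally show "length \<pi> \<le> R * b * tsize t" .
    qed
    then have "theight (Mev (annM M) ta (init M)) \<le> R * b * tsize t" by (rule theight_bound)
    then show "theight (Mout M t) \<le> R * b * tsize t" using er theight_map by metis
  qed
qed

end
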